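(* There is a constant $c>0$ such that for every formula $\phi$ in $\mathsf F(\mathrm{LTL}[\mathsf O])$ there is a deterministic Büchi automaton for $\mathcal L^\omega(\phi)$ with at most $2^{c\cdot\mathrm{size}(\phi)}$ states.
   Context: Let $AP$ be a finite set of atomic propositions and $\Sigma=2^{AP}$. Formulae of $\mathrm{LTL}[\mathsf O]$ are built from literals $p,\neg p$ ($p\in AP$) with $\land,\lor$ and the operator $\mathsf O$; $\mathsf F(\mathrm{LTL}[\mathsf O])$ consists of formulae $\mathsf F(\alpha)$ with $\alpha\in\mathrm{LTL}[\mathsf O]$. Semantics on infinite traces $\sigma\in\Sigma^\omega$ at positions $i\in\mathbb N$: literals/Booleans as usual; $\mathsf F\phi$: $\phi$ holds at some $j\ge i$; $\mathsf O\phi$: $\phi$ holds at some $0\le j\le i$; $\mathcal L^\omega(\phi)=\{\sigma\in\Sigma^\omega:\sigma,0\models\phi\}$. Size: literals 1, unary operators add 1, binary connectives sum plus 1. A deterministic Büchi automaton is $(Q,\Sigma,\delta,q_0,F)$ with finite $Q$, total $\delta:Q\times\Sigma\to Q$, initial $q_0$, accepting $F\subseteq Q$; it accepts $\sigma\in\Sigma^\omega$ iff its run visits $F$ infinitely often. *)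

theory Defs
  imports Complex_Main
begin

text \<open>Formulas over atomic propositions of type 'a: literals, conjunction,
  disjunction, the past operator O (once) and the future operator F.\<close>
datatype 'a ltl =
    Prop 'a
  | NProp 'a
  | And "'a ltl" "'a ltl"
  | Or "'a ltl" "'a ltl"
  | Once "'a ltl"
  | Ev "'a ltl"

fun is_ltlO :: "'a ltl \<Rightarrow> bool" where
  "is_ltlO (Prop p) = True"
| "is_ltlO (NProp p) = True"
| "is_ltlO (And a b) = (is_ltlO a \<and> is_ltlO b)"
| "is_ltlO (Or a b) = (is_ltlO a \<and> is_ltlO b)"
| "is_ltlO (Once a) = is_ltlO a"
| "is_ltlO (Ev a) = False"

definition is_F_ltlO :: "'a ltl \<Rightarrow> bool" where
  "is_F_ltlO \<phi> = (\<exists>\<alpha>. \<phi> = Ev \<alpha> \<and> is_ltlO \<alpha>)"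

fun atoms :: "'a ltl \<Rightarrow> 'a set" where
  "atoms (Prop p) = {p}"
| "atoms (NProp p) = {p}"
| "atoms (And a b) = atoms a \<union> atoms b"
| "atoms (Or a b) = atoms a \<union> atoms b"
| "atoms (Once a) = atoms a"
| "atoms (Ev a) = atoms a"

fun fsize :: "'a ltl \<Rightarrow> nat" where
  "fsize (Prop p) = 1"
| "fsize (NProp p) = 1"
| "fsize (And a b) = fsize a + fsize b + 1"
| "fsize (Or a b) = fsize a + fsize b + 1"
| "fsize (Once a) = fsize a + 1"
| "fsize (Ev a) = fsize a + 1"

fun sat :: "(nat \<Rightarrow> 'a set) \<Rightarrow> nat \<Rightarrow> 'a ltl \<Rightarrow> bool" where
  "sat \<sigma> i (Prop p) = (p \<in> \<sigma> i)"
| "sat \<sigma> i (NProp p) = (p \<notin> \<sigma> i)"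
| "sat \<sigma> i (And a b) = (sat \<sigma> i a \<and> sat \<sigma> i b)"
| "sat \<sigma> i (Or a b) = (sat \<sigma> i a \<or> sat \<sigma> i b)"
| "sat \<sigma> i (Once a) = (\<exists>j\<le>i. sat \<sigma> j a)"
| "sat \<sigma> i (Ev a) = (\<exists>j\<ge>i. sat \<sigma> j a)"

definition words :: "'a set \<Rightarrow> (nat \<Rightarrow> 'a set) set" where
  "words AP = {\<sigma>. \<forall>i. \<sigma> i \<subseteq> AP}"

definition lang :: "'a set \<Rightarrow> 'a ltl \<Rightarrow> (nat \<Rightarrow> 'a set) set" where
  "lang AP \<phi> = {\<sigma> \<in> words AP. sat \<sigma> 0 \<phi>}"

definition is_DBA :: "'a set \<Rightarrow> nat set \<Rightarrow> (nat \<Rightarrow> 'a set \<Rightarrow> nat) \<Rightarrow> nat \<Rightarrow> nat set \<Rightarrow> bool" where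
  "is_DBA AP Q \<delta> q0 F =
     (finite Q \<and> q0 \<in> Q \<and> F \<subseteq> Q \<and> (\<forall>q\<in>Q. \<forall>a. a \<subseteq> AP \<longrightarrow> \<delta> q a \<in> Q))"

fun run :: "(nat \<Rightarrow> 'a set \<Rightarrow> nat) \<Rightarrow> nat \<Rightarrow> (nat \<Rightarrow> 'a set) \<Rightarrow> nat \<Rightarrow> nat" where
  "run \<delta> q0 \<sigma> 0 = q0"
| "run \<delta> q0 \<sigma> (Suc i) = \<delta> (run \<delta> q0 \<sigma> i) (\<sigma> i)"

definition dba_lang :: "'a set \<Rightarrow> (nat \<Rightarrow> 'a set \<Rightarrow> nat) \<Rightarrow> nat \<Rightarrow> nat set \<Rightarrow> (nat \<Rightarrow> 'a set) set" where
  "dba_lang AP \<delta> q0 F = {\<sigma> \<in> words AP. \<exists>\<^sub>\<infinity>i. run \<delta> q0 \<sigma> i \<in> F}"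

end

theory Submission
  imports Defs "HOL-Library.Infinite_Set"
begin

fun subs :: "'a ltl \<Rightarrow> 'a ltl set" where
  "subs (Prop p) = {Prop p}"
| "subs (NProp p) = {NProp p}"
| "subs (And a b) = insert (And a b) (subs a \<union> subs b)"
| "subs (Or a b) = insert (Or a b) (subs a \<union> subs b)"
| "subs (Once a) = insert (Once a) (subs a)"
| "subs (Ev a) = insert (Ev a) (subs a)"

lemma subs_finite: "finite (subs a)"
  by (induction a) auto

lemma subs_self: "a \<in> subs a"
  by (cases a) auto

lemma subs_card: "card (subs a) \<le> fsize a"
proof (induction a)
  case (And a b)
  have "card (subs (And a b)) \<le> Suc (card (subs a \<union> subs b))"
    by (simp add: card_insert_le_m1 card_insert_if subs_finite)
  also have "\<dots> \<le> Suc (card (subs a) + card (subs b))" using card_Un_le by simp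
  finally show ?case using And by simp
next
  case (Or a b)
  have "card (subs (Or a b)) \<le> Suc (card (subs a \<union> subs b))"
    by (simp add: card_insert_le_m1 card_insert_if subs_finite)
  also have "\<dots> \<le> Suc (card (subs a) + card (subs b))" using card_Un_le by simp
  finally show ?case using Or by simp
next
  case (Once a)
  then show ?case by (simp add: card_insert_if subs_finite)
next
  case (Ev a)
  then show ?case by (simp add: card_insert_if subs_finite)
qed auto

lemma subs_trans: "\<psi> \<in> subs \<alpha> \<Longrightarrow> subs \<psi> \<subseteq> subs \<alpha>"
  by (induction \<alpha>) auto

lemma subs_ltlO: "\<psi> \<in> subs \<alpha> \<Longrightarrow> is_ltlO \<alpha> \<Longrightarrow> is_ltlO \<psi>"
  by (induction \<alpha>) auto

fun eval :: "'a ltl set \<Rightarrow> 'a set \<Rightarrow> 'a ltl \<Rightarrow> bool" where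
  "eval S a (Prop p) = (p \<in> a)"
| "eval S a (NProp p) = (p \<notin> a)"
| "eval S a (And x y) = (eval S a x \<and> eval S a y)"
| "eval S a (Or x y) = (eval S a x \<or> eval S a y)"
| "eval S a (Once x) = (x \<in> S \<or> eval S a x)"
| "eval S a (Ev x) = False"

lemma eval_correct:
  assumes "is_ltlO \<psi>" "subs \<psi> \<subseteq> subs \<alpha>"
  shows "eval {\<chi> \<in> subs \<alpha>. \<exists>j<i. sat \<sigma> j \<chi>} (\<sigma> i) \<psi> = sat \<sigma> i \<psi>"
  using assms
proof (induction \<psi>)
  case (Once x)
  have "x \<in> subs \<alpha>" using Once.prems subs_self[of x] by auto
  moreover have "(\<exists>j\<le>i. sat \<sigma> j x) = ((\<exists>j<i. sat \<sigma> j x) \<or> sat \<sigma> i x)"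
    using le_less by auto
  ultimately show ?case using Once by auto
qed auto

theorem lemma8:
  "\<exists>c::real. c > 0 \<and>
     (\<forall>(AP :: 'a set) (\<phi> :: 'a ltl). finite AP \<longrightarrow> atoms \<phi> \<subseteq> AP \<longrightarrow> is_F_ltlO \<phi> \<longrightarrow>
        (\<exists>Q \<delta> q0 F. is_DBA AP Q \<delta> q0 F \<and> dba_lang AP \<delta> q0 F = lang AP \<phi> \<and>
            real (card Q) \<le> 2 powr (c * real (fsize \<phi>))))"
proof (intro exI[of _ 1] conjI allI impI)
  fix AP :: "'a set" and \<phi> :: "'a ltl"
  assume "is_F_ltlO \<phi>"
  then obtain \<alpha> where phi: "\<phi> = Ev \<alpha>" and al: "is_ltlO \<alpha>" unfolding is_F_ltlO_def by auto
  define QA where "QA = Pow (subs \<alpha>) \<times> (UNIV :: bool set)"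
  have finQA: "finite QA" unfolding QA_def using subs_finite by (intro finite_cartesian_product) (auto simp: UNIV_bool)
  obtain f :: "'a ltl set \<times> bool \<Rightarrow> nat" where f: "bij_betw f QA {0..<card QA}"
    using ex_bij_betw_finite_nat[OF finQA] by blast
  hence inj: "inj_on f QA" by (rule bij_betw_imp_inj_on)
  define g where "g = inv_into QA f"
  define stepA where "stepA = (\<lambda>(S, b) a. (S \<union> {\<psi> \<in> subs \<alpha>. eval S a \<psi>}, b \<or> eval S a \<alpha>))"
  have stepQ: "stepA q a \<in> QA" if "q \<in> QA" for q a
    using that unfolding QA_def stepA_def by auto
  define \<delta> where "\<delta> = (\<lambda>n a. f (stepA (g n) a))"
  define Q where "Q = f ` QA"
  define q0 where "q0 = f ({}, False)"
  define F where "F = f ` (Pow (subs \<alpha>) \<times> {True})"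
  have gf: "g (f q) = q" if "q \<in> QA" for q
    unfolding g_def using inv_into_f_f[OF inj that] .
  have DBA: "is_DBA AP Q \<delta> q0 F"
    unfolding is_DBA_def
  proof (intro conjI ballI allI impI)
    show "finite Q" unfolding Q_def using finQA by simp
    show "q0 \<in> Q" unfolding Q_def q0_def QA_def by auto
    show "F \<subseteq> Q" unfolding Q_def F_def QA_def by auto
    fix q a assume "q \<in> Q"
    then obtain p where "p \<in> QA" "q = f p" unfolding Q_def by auto
    then show "\<delta> q a \<in> Q" unfolding \<delta>_def Q_def using gf stepQ by auto
  qed
  define St where "St = (\<lambda>\<sigma> i. ({\<chi> \<in> subs \<alpha>. \<exists>j<i. sat \<sigma> j \<chi>}, \<exists>j<i. sat \<sigma> j \<alpha>))"
  have StQ: "St \<sigma> i \<in> QA" for \<sigma> i unfolding St_def QA_def by auto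
  have runSt: "run \<delta> q0 \<sigma> i = f (St \<sigma> i)" for \<sigma> i
  proof (induction i)
    case 0
    then show ?case unfolding q0_def St_def by simp
  next
    case (Suc i)
    have ev: "eval {\<chi> \<in> subs \<alpha>. \<exists>j<i. sat \<sigma> j \<chi>} (\<sigma> i) \<psi> = sat \<sigma> i \<psi>"
      if "\<psi> \<in> subs \<alpha>" for \<psi>
    proof (rule eval_correct)
      show "subs \<psi> \<subseteq> subs \<alpha>" using that by (rule subs_trans)
      show "is_ltlO \<psi>" using that al by (rule subs_ltlO)
    qed
    have e2: "eval {\<chi> \<in> subs \<alpha>. \<exists>j<i. sat \<sigma> j \<chi>} (\<sigma> i) \<alpha> = sat \<sigma> i \<alpha>"
      using ev subs_self by blast
    have "stepA (St \<sigma> i) (\<sigma> i) = St \<sigma> (Suc i)"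
      unfolding stepA_def St_def using ev e2 less_Suc_eq by auto
    then show ?case using Suc gf StQ unfolding \<delta>_def by simp
  qed
  have inF: "run \<delta> q0 \<sigma> i \<in> F \<longleftrightarrow> (\<exists>j<i. sat \<sigma> j \<alpha>)" for \<sigma> i
  proof -
    have "run \<delta> q0 \<sigma> i \<in> F \<longleftrightarrow> St \<sigma> i \<in> Pow (subs \<alpha>) \<times> {True}"
      unfolding runSt F_def
      by (rule inj_on_image_mem_iff[OF inj]) (use StQ in \<open>auto simp: QA_def\<close>)
    then show ?thesis unfolding St_def by auto
  qed
  have acc: "(\<exists>\<^sub>\<infinity>i. \<exists>j<i. sat \<sigma> j \<alpha>) \<longleftrightarrow> (\<exists>j. sat \<sigma> j \<alpha>)" for \<sigma>
  proof
    assume "\<exists>\<^sub>\<infinity>i. \<exists>j<i. sat \<sigma> j \<alpha>"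
    then show "\<exists>j. sat \<sigma> j \<alpha>" using frequently_ex by blast
  next
    assume "\<exists>j. sat \<sigma> j \<alpha>"
    then obtain j where "sat \<sigma> j \<alpha>" by blast
    then show "\<exists>\<^sub>\<infinity>i. \<exists>j<i. sat \<sigma> j \<alpha>"
      unfolding INFM_nat_le
    proof (intro allI)
      fix m show "\<exists>n\<ge>m. \<exists>j<n. sat \<sigma> j \<alpha>"
        using \<open>sat \<sigma> j \<alpha>\<close> by (intro exI[of _ "max m (Suc j)"]) (auto intro!: exI[of _ j])
    qed
  qed
  have L: "dba_lang AP \<delta> q0 F = lang AP \<phi>"
  proof -
    have "(\<exists>\<^sub>\<infinity>i. run \<delta> q0 \<sigma> i \<in> F) \<longleftrightarrow> sat \<sigma> 0 \<phi>" for \<sigma>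
      unfolding inF acc phi by simp
    then show ?thesis unfolding dba_lang_def lang_def by blast
  qed
  have "card Q = card QA" unfolding Q_def using card_image[OF inj] .
  also have "\<dots> = 2 ^ card (subs \<alpha>) * 2" unfolding QA_def
    by (simp add: card_cartesian_product card_Pow subs_finite)
  also have "\<dots> \<le> 2 ^ fsize \<alpha> * 2" using subs_card[of \<alpha>] by simp
  also have "\<dots> = 2 ^ fsize \<phi>" unfolding phi by simp
  finally have "card Q \<le> (2::nat) ^ fsize \<phi>" .
  then have "real (card Q) \<le> real ((2::nat) ^ fsize \<phi>)" by (rule of_nat_mono)
  then have "real (card Q) \<le> 2 ^ fsize \<phi>" by simp
  then have "real (card Q) \<le> 2 powr (1 * real (fsize \<phi>))"
    by (simp add: powr_realpow)
  with DBA L show "\<exists>Q \<delta> q0 F. is_DBA AP Q \<delta> q0 F \<and> dba_lang AP \<delta> q0 F = lang AP \<phi> \<and>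
            real (card Q) \<le> 2 powr (1 * real (fsize \<phi>))" by blast
qed simp

end
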